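(* For every leaf node $u$ in a partially built threshold tree $\mathcal{T}_t$, we have $\frac{1}{\sqrt{2}} R_u \leq D_u \leq 2R_u$.
   Context: Let $C_u\subseteq \mathbb{R}^d$ be the finite set of centers assigned to node $u$ of the threshold tree being built by the algorithm. Let $m^u$ be a (coordinate-wise) median of $C_u$, i.e., a point such that for every coordinate $i$, each of the sets $\{c\in C_u: c_i < m^u_i\}$ and $\{c\in C_u: c_i > m^u_i\}$ contains at most half of the points of $C_u$. Let $R_u = \max\{\|c-m^u\|_2 : c\in C_u\}$ be the maximum distance from $m^u$ to a center in $C_u$, and let $D_u = \max\{\|c'-c''\|_2 : c',c''\in C_u\}$ be the diameter of $C_u$. *)

theory Defs
  imports "HOL-Analysis.Analysis"
begin

definition coord_median :: "(real ^ 'n) set \<Rightarrow> real ^ 'n \<Rightarrow> bool" where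
  "coord_median C m \<longleftrightarrow>
     (\<forall>i. 2 * card {c \<in> C. c $ i < m $ i} \<le> card C \<and>
          2 * card {c \<in> C. c $ i > m $ i} \<le> card C)"

definition max_radius :: "(real ^ 'n) set \<Rightarrow> real ^ 'n \<Rightarrow> real" where
  "max_radius C m = Max ((\<lambda>c. norm (c - m)) ` C)"

definition diam_set :: "(real ^ 'n) set \<Rightarrow> real" where
  "diam_set C = Max {norm (c' - c'') | c' c''. c' \<in> C \<and> c'' \<in> C}"

end

theory Submission
  imports Defs
begin

lemma norm_sq_vec: "(norm (x :: real ^ 'n))^2 = (\<Sum>i\<in>UNIV. (x$i)^2)"
  unfolding power2_norm_eq_inner inner_vec_def by (simp add: power2_eq_square)

lemma coord_bound:
  fixes C :: "(real ^ 'n) set"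
  assumes fin: "finite C" and med: "coord_median C m"
  shows "real (card C) * (x - m$i)^2 \<le> 2 * (\<Sum>c'\<in>C. (x - c'$i)^2)"
proof (cases "x \<ge> m$i")
  case True
  let ?S = "{c\<in>C. \<not> c$i > m$i}"
  have h: "2 * card {c \<in> C. c $ i > m $ i} \<le> card C" using med unfolding coord_median_def by blast
  have "card ?S + card {c \<in> C. c $ i > m $ i} = card C"
  proof -
    have "?S \<union> {c \<in> C. c $ i > m $ i} = C" by auto
    moreover have "?S \<inter> {c \<in> C. c $ i > m $ i} = {}" by auto
    moreover have "finite ?S" "finite {c \<in> C. c $ i > m $ i}" using fin by auto
    ultimately show ?thesis using card_Un_disjoint[of ?S "{c \<in> C. c $ i > m $ i}"] by simp
  qed
  then have cS: "real (card C) \<le> 2 * real (card ?S)" using h by linarith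
  have "real (card ?S) * (x - m$i)^2 = (\<Sum>c'\<in>?S. (x - m$i)^2)" by simp
  also have "\<dots> \<le> (\<Sum>c'\<in>?S. (x - c'$i)^2)"
    using True by (intro sum_mono power_mono) auto
  also have "\<dots> \<le> (\<Sum>c'\<in>C. (x - c'$i)^2)"
    using fin by (intro sum_mono2) auto
  finally have A: "real (card ?S) * (x - m$i)^2 \<le> (\<Sum>c'\<in>C. (x - c'$i)^2)" .
  have "real (card C) * (x - m$i)^2 \<le> (2 * real (card ?S)) * (x - m$i)^2"
    using cS by (intro mult_right_mono) auto
  then show ?thesis using A by linarith
next
  case False
  let ?S = "{c\<in>C. \<not> c$i < m$i}"
  have h: "2 * card {c \<in> C. c $ i < m $ i} \<le> card C" using med unfolding coord_median_def by blast
  have "card ?S + card {c \<in> C. c $ i < m $ i} = card C"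
  proof -
    have "?S \<union> {c \<in> C. c $ i < m $ i} = C" by auto
    moreover have "?S \<inter> {c \<in> C. c $ i < m $ i} = {}" by auto
    moreover have "finite ?S" "finite {c \<in> C. c $ i < m $ i}" using fin by auto
    ultimately show ?thesis using card_Un_disjoint[of ?S "{c \<in> C. c $ i < m $ i}"] by simp
  qed
  then have cS: "real (card C) \<le> 2 * real (card ?S)" using h by linarith
  have "real (card ?S) * (x - m$i)^2 = (\<Sum>c'\<in>?S. (x - m$i)^2)" by simp
  also have "\<dots> \<le> (\<Sum>c'\<in>?S. (x - c'$i)^2)"
  proof (intro sum_mono)
    fix c' assume "c' \<in> ?S"
    then have "c'$i \<ge> m$i" by auto
    then have "(m$i - x)^2 \<le> (c'$i - x)^2" using False by (intro power_mono) auto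
    then show "(x - m$i)^2 \<le> (x - c'$i)^2" by (simp add: power2_commute)
  qed
  also have "\<dots> \<le> (\<Sum>c'\<in>C. (x - c'$i)^2)"
    using fin by (intro sum_mono2) auto
  finally have A: "real (card ?S) * (x - m$i)^2 \<le> (\<Sum>c'\<in>C. (x - c'$i)^2)" .
  have "real (card C) * (x - m$i)^2 \<le> (2 * real (card ?S)) * (x - m$i)^2"
    using cS by (intro mult_right_mono) auto
  then show ?thesis using A by linarith
qed

theorem lemma2:
  fixes C :: "(real ^ 'n) set" and m :: "real ^ 'n"
  assumes "finite C" and "C \<noteq> {}"
    and "coord_median C m"
  shows "max_radius C m / sqrt 2 \<le> diam_set C \<and> diam_set C \<le> 2 * max_radius C m"
proof -
  let ?R = "max_radius C m" and ?D = "diam_set C"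
  have finD: "finite {norm (c' - c'') | c' c''. c' \<in> C \<and> c'' \<in> C}"
  proof -
    have "{norm (c' - c'') | c' c''. c' \<in> C \<and> c'' \<in> C} = (\<lambda>(a,b). norm (a - b)) ` (C \<times> C)" by auto
    then show ?thesis using assms(1) by simp
  qed
  have Rge: "norm (c - m) \<le> ?R" if "c \<in> C" for c
    unfolding max_radius_def using assms(1) that by auto
  have Dge: "norm (a - b) \<le> ?D" if "a \<in> C" "b \<in> C" for a b
    unfolding diam_set_def using finD that by (intro Max_ge) auto
  obtain c where cC: "c \<in> C" and cR: "?R = norm (c - m)"
  proof -
    have "?R \<in> (\<lambda>c. norm (c - m)) ` C" unfolding max_radius_def
      using assms(1,2) by (intro Max_in) auto
    then show ?thesis using that by auto
  qed
  obtain a b where ab: "a \<in> C" "b \<in> C" "?D = norm (a - b)"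
  proof -
    have "?D \<in> {norm (c' - c'') | c' c''. c' \<in> C \<and> c'' \<in> C}" unfolding diam_set_def
      using finD assms(2) by (intro Max_in) auto
    then show ?thesis using that by auto
  qed
  have part2: "?D \<le> 2 * ?R"
  proof -
    have "norm (a - b) \<le> norm (a - m) + norm (b - m)"
      using norm_triangle_ineq4[of "a - m" "b - m"] by simp
    then show ?thesis using ab Rge[of a] Rge[of b] by linarith
  qed
  have "real (card C) * ?R^2 = (\<Sum>i\<in>UNIV. real (card C) * (c$i - m$i)^2)"
    using cR norm_sq_vec[of "c - m"] by (simp add: sum_distrib_left)
  also have "\<dots> \<le> (\<Sum>i\<in>UNIV. 2 * (\<Sum>c'\<in>C. (c$i - c'$i)^2))"
    by (intro sum_mono coord_bound[OF assms(1,3)])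
  also have "\<dots> = 2 * (\<Sum>i\<in>UNIV. \<Sum>c'\<in>C. (c$i - c'$i)^2)"
    by (simp add: sum_distrib_left)
  also have "\<dots> = 2 * (\<Sum>c'\<in>C. \<Sum>i\<in>UNIV. (c$i - c'$i)^2)"
    by (rule arg_cong[where f="\<lambda>x. 2*x"], rule sum.swap)
  also have "\<dots> = 2 * (\<Sum>c'\<in>C. (norm (c - c'))^2)"
    by (simp add: norm_sq_vec)
  finally have S: "real (card C) * ?R^2 \<le> 2 * (\<Sum>c'\<in>C. (norm (c - c'))^2)" .
  have "\<exists>c'\<in>C. ?R^2 \<le> 2 * (norm (c - c'))^2"
  proof (rule ccontr)
    assume "\<not> ?thesis"
    then have "\<forall>c'\<in>C. 2 * (norm (c - c'))^2 < ?R^2" by auto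
    then have "(\<Sum>c'\<in>C. 2 * (norm (c - c'))^2) < (\<Sum>c'\<in>C. ?R^2)"
      using assms(1,2) by (intro sum_strict_mono) auto
    then show False using S by (simp add: sum_distrib_left)
  qed
  then obtain c' where c': "c' \<in> C" "?R^2 \<le> 2 * (norm (c - c'))^2" by blast
  have R0: "?R \<ge> 0" using Rge[OF cC] norm_ge_zero[of "c - m"] by linarith
  have "?R / sqrt 2 \<le> norm (c - c')"
  proof -
    have "(?R / sqrt 2)^2 \<le> (norm (c - c'))^2" using c' by (simp add: power_divide)
    then show ?thesis using R0 by (meson norm_ge_zero power2_le_imp_le)
  qed
  also have "\<dots> \<le> ?D" using Dge cC c' by auto
  finally show ?thesis using part2 by simp
qed

end
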